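(* Let $n>1$ be an integer, let $D'\in\mathcal{T}_{n-1}$ and let $b\in V(D')$. Let $D$ be the digraph with $V(D)=V(D')\cup\{a\}$, where $a$ is a new vertex, and whose arc set is defined by one of the following rules: (i) if $b$ is domination-forced in $D'$, then $A(D)=A(D')\cup\{ba,aa\}$; (ii) if $bb$ is not an arc, $d^+_{D'}(f^-_{D'}(b))=1$ and $f^-_{D'}(b)$ is domination-forced in $D'$, then $A(D)=A(D')\cup\{ab,aa\}$. Then $D\in\mathcal{T}_n$.
   Context: Digraphs are finite and may contain loops; between two distinct vertices there may be arcs in one or both directions, no repeated arcs; $A(D)$ is the arc set. $N^-(v)=\{u: uv\text{ is an arc}\}$, $N^+(v)=\{u:vu\text{ is an arc}\}$ (loops included), $d^+(v)=|N^+(v)|$. An OLD set of $D$ is a set $S\subseteq V(D)$ such that every vertex has an in-neighbour in $S$ and for every two distinct vertices $u,w$ some vertex of $S$ lies in exactly one of $N^-(u),N^-(w)$. $D$ is locatable if it has an OLD set, and then $\gamma_{OL}(D)$ is the minimum size of an OLD set. A vertex $v$ is domination-forced if some vertex $w$ has $N^-(w)=\{v\}$. An arc $xy$ (possibly a loop) is forcing if $N^-(y)=\{x\}$ or there is a vertex $z$ with $N^-(z)=N^-(y)\setminus\{x\}$. In a locatable digraph $D'$ of order $m$ with $\gamma_{OL}(D')=m$, every vertex $v$ is the head of exactly one forcing arc; its tail is denoted $f^-_{D'}(v)$. The underlying graph of $D$ is the simple undirected graph on $V(D)$ with an edge $xy$ ($x\ne y$) whenever $xy$ or $yx$ is an arc.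 $\mathcal{T}_n$ is the set of all connected locatable digraphs $D$ of order $n$ with $\gamma_{OL}(D)=n$ whose underlying graph is a tree. *)

theory Defs
  imports Main
begin

text \<open>A digraph is given by a vertex set V and an arc set A (pairs (x,y) = arc xy);
loops allowed, no repeated arcs (A is a set).\<close>

definition digraph :: "'a set \<Rightarrow> ('a \<times> 'a) set \<Rightarrow> bool" where
  "digraph V A \<longleftrightarrow> finite V \<and> A \<subseteq> V \<times> V"

definition in_nbrs :: "('a \<times> 'a) set \<Rightarrow> 'a \<Rightarrow> 'a set" where
  "in_nbrs A v = {u. (u, v) \<in> A}"

definition out_nbrs :: "('a \<times> 'a) set \<Rightarrow> 'a \<Rightarrow> 'a set" where
  "out_nbrs A v = {u. (v, u) \<in> A}"

definition out_degree :: "('a \<times> 'a) set \<Rightarrow> 'a \<Rightarrow> nat" where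
  "out_degree A v = card (out_nbrs A v)"

definition is_OLD :: "'a set \<Rightarrow> ('a \<times> 'a) set \<Rightarrow> 'a set \<Rightarrow> bool" where
  "is_OLD V A S \<longleftrightarrow> S \<subseteq> V
     \<and> (\<forall>v\<in>V. \<exists>s\<in>S. s \<in> in_nbrs A v)
     \<and> (\<forall>u\<in>V. \<forall>w\<in>V. u \<noteq> w \<longrightarrow> (\<exists>s\<in>S. (s \<in> in_nbrs A u) \<noteq> (s \<in> in_nbrs A w)))"

definition locatable :: "'a set \<Rightarrow> ('a \<times> 'a) set \<Rightarrow> bool" where
  "locatable V A \<longleftrightarrow> (\<exists>S. is_OLD V A S)"

definition gamma_OL :: "'a set \<Rightarrow> ('a \<times> 'a) set \<Rightarrow> nat" where
  "gamma_OL V A = (LEAST k. \<exists>S. is_OLD V A S \<and> card S = k)"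

definition domination_forced :: "'a set \<Rightarrow> ('a \<times> 'a) set \<Rightarrow> 'a \<Rightarrow> bool" where
  "domination_forced V A v \<longleftrightarrow> (\<exists>w\<in>V. in_nbrs A w = {v})"

definition forcing_arc :: "'a set \<Rightarrow> ('a \<times> 'a) set \<Rightarrow> 'a \<Rightarrow> 'a \<Rightarrow> bool" where
  "forcing_arc V A x y \<longleftrightarrow> (x, y) \<in> A \<and>
     (in_nbrs A y = {x} \<or> (\<exists>z\<in>V. in_nbrs A z = in_nbrs A y - {x}))"

text \<open>Tail of the (unique, in the relevant setting) forcing arc with head v.\<close>
definition f_minus :: "'a set \<Rightarrow> ('a \<times> 'a) set \<Rightarrow> 'a \<Rightarrow> 'a" where
  "f_minus V A v = (THE x. forcing_arc V A x v)"

definition ug_adj :: "('a \<times> 'a) set \<Rightarrow> 'a \<Rightarrow> 'a \<Rightarrow> bool" where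
  "ug_adj A x y \<longleftrightarrow> x \<noteq> y \<and> ((x, y) \<in> A \<or> (y, x) \<in> A)"

definition ug_connected :: "'a set \<Rightarrow> ('a \<times> 'a) set \<Rightarrow> bool" where
  "ug_connected V A \<longleftrightarrow>
     (\<forall>x\<in>V. \<forall>y\<in>V. (x, y) \<in> {(u, v). u \<in> V \<and> v \<in> V \<and> ug_adj A u v}\<^sup>*)"

definition ug_cycle :: "'a set \<Rightarrow> ('a \<times> 'a) set \<Rightarrow> 'a list \<Rightarrow> bool" where
  "ug_cycle V A cs \<longleftrightarrow> length cs \<ge> 3 \<and> distinct cs \<and> set cs \<subseteq> V
     \<and> (\<forall>i. Suc i < length cs \<longrightarrow> ug_adj A (cs ! i) (cs ! Suc i))
     \<and> ug_adj A (last cs) (hd cs)"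

definition ug_tree :: "'a set \<Rightarrow> ('a \<times> 'a) set \<Rightarrow> bool" where
  "ug_tree V A \<longleftrightarrow> V \<noteq> {} \<and> ug_connected V A \<and> (\<nexists>cs. ug_cycle V A cs)"

definition in_T :: "nat \<Rightarrow> 'a set \<Rightarrow> ('a \<times> 'a) set \<Rightarrow> bool" where
  "in_T n V A \<longleftrightarrow> digraph V A \<and> card V = n \<and> ug_connected V A \<and> locatable V A
     \<and> gamma_OL V A = n \<and> ug_tree V A"

end

theory Submission
  imports Defs
begin

definition crit :: "'a set set \<Rightarrow> 'a \<Rightarrow> bool" where
  "crit F x \<longleftrightarrow> (\<exists>P\<in>F. x \<in> P \<and> P - {x} \<in> F)"

lemma crit_contract:
  assumes "crit F y" "y \<noteq> x"
  shows "crit ((\<lambda>S. S - {x}) ` F) y"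
proof -
  obtain Q where Q: "Q \<in> F" "y \<in> Q" "Q - {y} \<in> F" using assms(1) unfolding crit_def by blast
  have "Q - {x} \<in> (\<lambda>S. S - {x}) ` F" using Q(1) by (rule imageI)
  moreover have "(Q - {x}) - {y} \<in> (\<lambda>S. S - {x}) ` F"
  proof -
    have "(Q - {x}) - {y} = (Q - {y}) - {x}" by blast
    then show ?thesis using Q(3) by (intro image_eqI[of _ _ "Q - {y}"]) auto
  qed
  moreover have "y \<in> Q - {x}" using Q(2) assms(2) by blast
  ultimately show ?thesis unfolding crit_def by (intro bexI[of _ "Q - {x}"] conjI)
qed

lemma contract_eq:
  assumes "P \<in> F" "x \<in> P" "P - {x} \<in> F" "K \<subseteq> F" "\<forall>Q\<in>K. Q - {x} \<in> F - K"
  shows "(\<lambda>S. S - {x}) ` F = (\<lambda>S. S - {x}) ` (F - K)"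
proof
  show "(\<lambda>S. S - {x}) ` F \<subseteq> (\<lambda>S. S - {x}) ` (F - K)"
  proof
    fix T assume "T \<in> (\<lambda>S. S - {x}) ` F"
    then obtain S where S: "S \<in> F" "T = S - {x}" by blast
    show "T \<in> (\<lambda>S. S - {x}) ` (F - K)"
    proof (cases "S \<in> K")
      case True
      then have "S - {x} \<in> F - K" using assms by blast
      moreover have "(S - {x}) - {x} = T" using S by blast
      ultimately show ?thesis by (intro image_eqI[of T _ "S - {x}"]) auto
    next
      case False then show ?thesis using S by blast
    qed
  qed
qed blast

lemma bondy:
  assumes "finite L"
  shows "finite F \<Longrightarrow> F \<noteq> {} \<Longrightarrow> \<forall>x\<in>L. crit F x \<Longrightarrow> card L + 1 \<le> card F"
  using assms
proof (induction L arbitrary: F rule: finite_induct)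
  case empty
  then show ?case by (simp add: Suc_leI card_gt_0_iff)
next
  case (insert x L)
  obtain P where P: "P \<in> F" "x \<in> P" "P - {x} \<in> F" using insert.prems(3) unfolding crit_def by blast
  define F' where "F' = (\<lambda>S. S - {x}) ` F"
  have c: "\<forall>y\<in>L. crit F' y"
  proof
    fix y assume y: "y \<in> L"
    then have "crit F y" "y \<noteq> x" using insert.prems(3) insert.hyps(2) by auto
    then show "crit F' y" unfolding F'_def by (rule crit_contract)
  qed
  have fF': "finite F'" "F' \<noteq> {}" unfolding F'_def using insert.prems(1,2) by auto
  have h1: "card L + 1 \<le> card F'" by (rule insert.IH[OF fF' c])
  have eq: "F' = (\<lambda>S. S - {x}) ` (F - {P})"
    unfolding F'_def by (rule contract_eq[OF P]) (use P in auto)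
  have "finite (F - {P})" using insert.prems(1) by simp
  then have "card F' \<le> card (F - {P})" unfolding eq by (rule card_image_le)
  then have h2: "card F' \<le> card F - 1" using P(1) insert.prems(1) by simp
  have h3: "card F > 0" using P(1) insert.prems(1) card_gt_0_iff by blast
  have h4: "card (insert x L) = card L + 1" using insert(1,2) by simp
  show ?case using h1 h2 h3 h4 by linarith
qed

lemma uniq:
  assumes "finite X" "finite F" "card F = card X + 1" "\<forall>y\<in>X. crit F y"
    "P \<in> F" "Q \<in> F" "x \<in> P" "x \<in> Q" "P - {x} \<in> F" "Q - {x} \<in> F"
  shows "P = Q"
proof (rule ccontr)
  assume ne: "P \<noteq> Q"
  define F' where "F' = (\<lambda>S. S - {x}) ` F"
  have c: "\<forall>y\<in>X - {x}. crit F' y"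
  proof
    fix y assume y: "y \<in> X - {x}"
    then have "crit F y" "y \<noteq> x" using assms(4) by auto
    then show "crit F' y" unfolding F'_def by (rule crit_contract)
  qed
  have fF': "finite F'" "F' \<noteq> {}" unfolding F'_def using assms(2,5) by auto
  have h1: "card (X - {x}) + 1 \<le> card F'"
    by (rule bondy[OF _ fF' c]) (use assms(1) in simp)
  have eq: "F' = (\<lambda>S. S - {x}) ` (F - {P, Q})"
    unfolding F'_def by (rule contract_eq[of P]) (use assms(5-10) ne in auto)
  have "finite (F - {P, Q})" using assms(2) by simp
  then have h2: "card F' \<le> card (F - {P, Q})" unfolding eq by (rule card_image_le)
  have h3: "card (F - {P, Q}) = card F - card {P, Q}"
    using assms(2,5,6) by (intro card_Diff_subset) auto
  have h4: "card (X - {x}) \<ge> card X - 1" by (cases "x \<in> X") (auto simp: card_Diff_singleton assms(1))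
  have h5: "card {P, Q} \<le> card F" using assms(2,5,6) by (intro card_mono) auto
  have h6: "card {P, Q} = 2" using ne by simp
  show False using h1 h2 h3 h4 h5 h6 assms(3) by linarith
qed

inductive reach :: "'a set set \<Rightarrow> 'a set \<Rightarrow> bool" for F where
  r0: "reach F {}"
| rs: "reach F Q \<Longrightarrow> x \<notin> Q \<Longrightarrow> insert x Q \<in> F \<Longrightarrow> reach F (insert x Q)"

lemma reach_F: "reach F Q \<Longrightarrow> {} \<in> F \<Longrightarrow> Q \<in> F"
  by (induction rule: reach.induct) auto

lemma reach_path: "reach F Q \<Longrightarrow> x \<in> Q \<Longrightarrow> \<exists>S. reach F S \<and> x \<notin> S \<and> insert x S \<in> F \<and> insert x S \<subseteq> Q"
proof (induction arbitrary: x rule: reach.induct)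
  case r0 then show ?case by simp
next
  case (rs Q y)
  show ?case
  proof (cases "x = y")
    case True then show ?thesis using rs by blast
  next
    case False then show ?thesis using rs by blast
  qed
qed

lemma all_reach:
  assumes "finite X" "finite F" "card F = card X + 1" "\<forall>y\<in>X. crit F y" "{} \<in> F"
    "\<forall>P\<in>F. P \<subseteq> X"
  shows "P \<in> F \<Longrightarrow> reach F P"
proof -
  define D where "D = {P\<in>F. reach F P}"
  have down: "Q - {x} \<in> D" if hh: "Q \<in> D" "x \<in> Q" "Q - {x} \<in> F" for Q x
  proof -
    have "reach F Q" using that D_def by blast
    then obtain S where S: "reach F S" "x \<notin> S" "insert x S \<in> F" "insert x S \<subseteq> Q"
      using reach_path[OF \<open>reach F Q\<close> hh(2)] by blast
    have SF: "S \<in> F" by (rule reach_F[OF S(1) assms(5)])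
    have QF: "Q \<in> F" using hh(1) D_def by blast
    have "insert x S - {x} = S" using S(2) by simp
    then have "insert x S = Q"
      using uniq[OF assms(1-4) S(3) QF _ hh(2) _ hh(3)] SF by simp
    then show ?thesis using S \<open>S \<in> F\<close> D_def by auto
  qed
  have up: "Q - {x} \<notin> D" if "Q \<in> F - D" "x \<in> Q" for Q x
  proof
    assume "Q - {x} \<in> D"
    have iq: "insert x (Q - {x}) = Q" using that(2) by blast
    have "reach F (Q - {x})" "x \<notin> Q - {x}" "insert x (Q - {x}) \<in> F"
      using \<open>Q - {x} \<in> D\<close> D_def iq that(1) by auto
    then have "reach F (insert x (Q - {x}))" by (rule rs)
    then show False using that(1) D_def iq by simp
  qed
  define L1 where "L1 = {x\<in>X. crit D x}"
  define L2 where "L2 = {x\<in>X. crit (F - D) x}"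
  have XL: "X \<subseteq> L1 \<union> L2"
  proof
    fix x assume x: "x \<in> X"
    have "crit F x" using assms(4) x by blast
    then obtain Q where Q: "Q \<in> F" "x \<in> Q" "Q - {x} \<in> F" unfolding crit_def by blast
    show "x \<in> L1 \<union> L2"
    proof (cases "Q \<in> D")
      case True
      have "Q - {x} \<in> D" by (rule down[OF True Q(2,3)])
      then have "crit D x" unfolding crit_def using True Q(2) by blast
      then show ?thesis using x unfolding L1_def by blast
    next
      case False
      then have "Q - {x} \<in> F - D" using up[of Q x] Q by blast
      moreover have "Q \<in> F - D" using False Q(1) by blast
      ultimately have "crit (F - D) x" unfolding crit_def using Q(2) by blast
      then show ?thesis using x unfolding L2_def by blast
    qed
  qed
  have DF: "D \<subseteq> F" using D_def by auto
  have fD: "finite D" using DF assms(2) finite_subset by blast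
  have "{} \<in> D" using D_def assms r0 by auto
  have b1: "card L1 + 1 \<le> card D"
  proof (rule bondy[OF _ fD])
    show "finite L1" using assms(1) L1_def by simp
    show "\<forall>x\<in>L1. crit D x" using L1_def by simp
  qed (use \<open>{} \<in> D\<close> in auto)
  have "F - D = {}"
  proof (rule ccontr)
    assume "F - D \<noteq> {}"
    have b2: "card L2 + 1 \<le> card (F - D)"
    proof (rule bondy)
      show "finite L2" using assms(1) L2_def by simp
      show "\<forall>x\<in>L2. crit (F - D) x" using L2_def by simp
      show "finite (F - D)" using assms(2) by simp
    qed fact
    have "finite (L1 \<union> L2)" using assms(1) L1_def L2_def by simp
    then have "card X \<le> card (L1 \<union> L2)" using XL by (rule card_mono)
    also have "\<dots> \<le> card L1 + card L2" by (rule card_Un_le)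
    finally have "card X \<le> card L1 + card L2" .
    moreover have "card (F - D) = card F - card D"
      by (rule card_Diff_subset[OF fD DF])
    moreover have "card D \<le> card F" by (rule card_mono[OF assms(2) DF])
    ultimately show False using b1 b2 assms(3) by simp
  qed
  then show "P \<in> F \<Longrightarrow> reach F P" using D_def by auto
qed

lemma down_exists:
  assumes "finite X" "finite F" "card F = card X + 1" "\<forall>y\<in>X. crit F y" "{} \<in> F"
    "\<forall>P\<in>F. P \<subseteq> X" "P \<in> F" "P \<noteq> {}"
  shows "\<exists>x. x \<in> P \<and> P - {x} \<in> F"
proof -
  have "reach F P" using all_reach assms by blast
  then show ?thesis using assms(8,5)
  proof cases
    case (rs Q x)
    then have "Q \<in> F" using reach_F assms(5) by blast
    then show ?thesis using rs by (intro exI[of _ x]) auto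
  qed simp
qed

lemma down_unique:
  assumes "finite X" "finite F" "card F = card X + 1" "\<forall>y\<in>X. crit F y" "{} \<in> F"
    "\<forall>P\<in>F. P \<subseteq> X" "P \<in> F" "x1 \<in> P" "P - {x1} \<in> F" "x2 \<in> P" "P - {x2} \<in> F"
  shows "x1 = x2"
proof -
  define up where "up x = (SOME P. P \<in> F \<and> x \<in> P \<and> P - {x} \<in> F)" for x
  have up1: "up x \<in> F \<and> x \<in> up x \<and> up x - {x} \<in> F" if "x \<in> X" for x
  proof -
    have "crit F x" using assms(4) that by blast
    then have "\<exists>P. P \<in> F \<and> x \<in> P \<and> P - {x} \<in> F" unfolding crit_def by blast
    then show ?thesis unfolding up_def by (rule someI_ex)
  qed
  have upeq: "up x = Q" if "Q \<in> F" "x \<in> Q" "Q - {x} \<in> F" for Q x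
  proof -
    have "x \<in> X" using that assms(6) by blast
    then have "up x \<in> F" "x \<in> up x" "up x - {x} \<in> F" using up1 by auto
    then show ?thesis using uniq[OF assms(1-4) _ that(1) _ that(2) _ that(3)] by blast
  qed
  have img: "up ` X = F - {{}}"
  proof
    show "up ` X \<subseteq> F - {{}}" using up1 by blast
    show "F - {{}} \<subseteq> up ` X"
    proof
      fix Q assume Q: "Q \<in> F - {{}}"
      then obtain x where x: "x \<in> Q" "Q - {x} \<in> F" using down_exists[OF assms(1-6), of Q] by blast
      then have "x \<in> X" using Q assms(6) by blast
      then show "Q \<in> up ` X" using upeq[of Q x] Q x by blast
    qed
  qed
  have "card (up ` X) = card X" using img assms(2,3,5) by (simp add: card_Diff_singleton)
  then have "inj_on up X" using assms(1) by (simp add: inj_on_iff_eq_card)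
  moreover have "x1 \<in> X" "x2 \<in> X" using assms(6,7,8,10) by auto
  moreover have "up x1 = P" using upeq[of P x1] assms(7,8,9) by blast
  moreover have "up x2 = P" using upeq[of P x2] assms(7,10,11) by blast
  ultimately show ?thesis by (metis inj_on_def)
qed


lemma OLD_mono: "is_OLD V A S \<Longrightarrow> S \<subseteq> T \<Longrightarrow> T \<subseteq> V \<Longrightarrow> is_OLD V A T"
  unfolding is_OLD_def by (meson subsetD)

lemma OLD_all:
  assumes "digraph V A" "gamma_OL V A = card V" "is_OLD V A S"
  shows "S = V"
proof -
  have "\<exists>S'. is_OLD V A S' \<and> card S' = card S" using assms(3) by blast
  then have "gamma_OL V A \<le> card S" unfolding gamma_OL_def by (rule Least_le)
  moreover have "S \<subseteq> V" using assms(3) unfolding is_OLD_def by simp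
  moreover have "finite V" using assms(1) unfolding digraph_def by simp
  ultimately show ?thesis using assms(2) card_seteq[of V S] by simp
qed

lemma forcing_tail:
  assumes dg: "digraph V A" and loc: "locatable V A" and g: "gamma_OL V A = card V" and y: "y \<in> V"
  shows "forcing_arc V A (f_minus V A y) y"
proof -
  have fin: "finite V" and AV: "A \<subseteq> V \<times> V" using dg digraph_def by auto
  have OV: "is_OLD V A V" using loc OLD_mono unfolding locatable_def by (metis is_OLD_def order_refl)
  define N where "N = in_nbrs A"
  define F where "F = insert {} (N ` V)"
  have Nsub: "N v \<subseteq> V" for v using AV unfolding N_def in_nbrs_def by auto
  have Nne: "N v \<noteq> {}" if "v \<in> V" for v using OV that unfolding is_OLD_def N_def by blast
  have inj: "inj_on N V" using OV unfolding is_OLD_def N_def inj_on_def by blast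
  have finF: "finite F" using fin F_def by simp
  have cardF: "card F = card V + 1"
  proof -
    have "{} \<notin> N ` V" using Nne by auto
    then have "card F = Suc (card (N ` V))" unfolding F_def using fin by simp
    then show ?thesis using card_image[OF inj] by simp
  qed
  have crit: "\<forall>x\<in>V. crit F x"
  proof
    fix x assume x: "x \<in> V"
    have "V - {x} \<noteq> V" using x by blast
    then have nO: "\<not> is_OLD V A (V - {x})" using OLD_all[OF dg g] by blast
    then consider (d) v where "v \<in> V" "\<forall>s\<in>V - {x}. s \<notin> N v"
      | (s) u w where "u \<in> V" "w \<in> V" "u \<noteq> w" "\<forall>s\<in>V - {x}. (s \<in> N u) = (s \<in> N w)"
      unfolding is_OLD_def N_def by blast
    then show "crit F x"
    proof cases
      case d
      then have "N v = {x}" using Nsub[of v] Nne[of v] by blast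
      then show ?thesis unfolding crit_def F_def using d by force
    next
      case s
      have "N u \<noteq> N w" using inj s inj_on_def by metis
      then consider "x \<in> N u" "N w = N u - {x}" | "x \<in> N w" "N u = N w - {x}"
        using s(4) Nsub[of u] Nsub[of w] by blast
      then show ?thesis
      proof cases
        case 1
        have "N u \<in> F" "N w \<in> F" using s(1,2) F_def by auto
        then show ?thesis unfolding crit_def using 1 by (intro bexI[of _ "N u"]) auto
      next
        case 2
        have "N u \<in> F" "N w \<in> F" using s(1,2) F_def by auto
        then show ?thesis unfolding crit_def using 2 by (intro bexI[of _ "N w"]) auto
      qed
    qed
  qed
  have FX: "\<forall>P\<in>F. P \<subseteq> V" using Nsub F_def by auto
  have e: "{} \<in> F" using F_def by simp
  have fa: "forcing_arc V A x y \<longleftrightarrow> x \<in> N y \<and> N y - {x} \<in> F" for x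
  proof -
    have "x \<in> N y \<Longrightarrow> (N y = {x}) = (N y - {x} = {})" by blast
    then show ?thesis unfolding forcing_arc_def F_def N_def in_nbrs_def by auto
  qed
  have NyF: "N y \<in> F" using y F_def by simp
  obtain x where x: "x \<in> N y" "N y - {x} \<in> F"
    using down_exists[OF fin finF cardF crit e FX NyF Nne[OF y]] by blast
  have "\<exists>!x. forcing_arc V A x y"
  proof
    show "forcing_arc V A x y" using fa x by blast
    fix x2 assume "forcing_arc V A x2 y"
    then have "x2 \<in> N y" "N y - {x2} \<in> F" using fa by auto
    then show "x2 = x" using down_unique[OF fin finF cardF crit e FX NyF _ _ x] by blast
  qed
  then show ?thesis unfolding f_minus_def by (rule theI')
qed

lemma tree_ext:
  assumes tr: "ug_tree V' A'" and AV: "A' \<subseteq> V' \<times> V'" and a: "a \<notin> V'" and b: "b \<in> V'"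
    and sub: "A' \<subseteq> A" and ab: "ug_adj A a b" and az: "\<And>z. ug_adj A a z \<Longrightarrow> z = b"
    and xy: "\<And>x y. x \<noteq> a \<Longrightarrow> y \<noteq> a \<Longrightarrow> ug_adj A x y \<Longrightarrow> ug_adj A' x y"
  shows "ug_connected (insert a V') A \<and> \<not>(\<exists>cs. ug_cycle (insert a V') A cs)"
proof
  have sym: "ug_adj A x y = ug_adj A y x" for x y unfolding ug_adj_def by blast
  let ?R' = "{(u, v). u \<in> V' \<and> v \<in> V' \<and> ug_adj A' u v}"
  let ?R = "{(u, v). u \<in> insert a V' \<and> v \<in> insert a V' \<and> ug_adj A u v}"
  have RR: "?R' \<subseteq> ?R" using sub unfolding ug_adj_def by auto
  have con': "\<forall>x\<in>V'. \<forall>y\<in>V'. (x, y) \<in> ?R'\<^sup>*" using tr unfolding ug_tree_def ug_connected_def by blast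
  have c1: "(x, y) \<in> ?R\<^sup>*" if "x \<in> V'" "y \<in> V'" for x y
  proof -
    have "(x, y) \<in> ?R'\<^sup>*" using con' that by blast
    then show ?thesis by (rule subsetD[OF rtrancl_mono[OF RR]])
  qed
  have ba: "ug_adj A b a" using ab sym by blast
  have abR: "(a, b) \<in> ?R" "(b, a) \<in> ?R" using ab ba b by auto
  show "ug_connected (insert a V') A"
    unfolding ug_connected_def
  proof (intro ballI)
    fix x y assume x: "x \<in> insert a V'" and y: "y \<in> insert a V'"
    show "(x, y) \<in> ?R\<^sup>*"
    proof (cases "x = a")
      case True
      show ?thesis
      proof (cases "y = a")
        case True then show ?thesis using \<open>x = a\<close> by simp
      next
        case False
        then have yV: "y \<in> V'" using y by blast
        have "(b, y) \<in> ?R\<^sup>*" by (rule c1[OF b yV])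
        then have "(a, y) \<in> ?R\<^sup>*" by (rule converse_rtrancl_into_rtrancl[OF abR(1)])
        then show ?thesis using \<open>x = a\<close> by simp
      qed
    next
      case False
      then have xV: "x \<in> V'" using x by blast
      show ?thesis
      proof (cases "y = a")
        case True
        have "(x, b) \<in> ?R\<^sup>*" by (rule c1[OF xV b])
        then have "(x, a) \<in> ?R\<^sup>*" by (rule rtrancl_into_rtrancl[OF _ abR(2)])
        then show ?thesis using True by simp
      next
        case False then show ?thesis using c1 xV y by blast
      qed
    qed
  qed
  show "\<not>(\<exists>cs. ug_cycle (insert a V') A cs)"
  proof
    assume "\<exists>cs. ug_cycle (insert a V') A cs"
    then obtain cs where cy: "ug_cycle (insert a V') A cs" by blast
    have len: "length cs \<ge> 3" and dis: "distinct cs" and st: "set cs \<subseteq> insert a V'"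
      and adj: "\<And>i. Suc i < length cs \<Longrightarrow> ug_adj A (cs ! i) (cs ! Suc i)"
      and la: "ug_adj A (last cs) (hd cs)" using cy unfolding ug_cycle_def by auto
    have ne: "cs \<noteq> []" using len by auto
    have hd0: "hd cs = cs ! 0" using ne by (simp add: hd_conv_nth)
    have last0: "last cs = cs ! (length cs - 1)" using ne by (simp add: last_conv_nth)
    show False
    proof (cases "a \<in> set cs")
      case False
      have "ug_cycle V' A' cs"
        unfolding ug_cycle_def
      proof (intro conjI allI impI)
        show "set cs \<subseteq> V'" using st False by blast
        fix i assume i: "Suc i < length cs"
        have "cs ! i \<noteq> a" "cs ! Suc i \<noteq> a" using False i nth_mem by (metis Suc_lessD)+
        then show "ug_adj A' (cs ! i) (cs ! Suc i)" using xy adj i by blast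
      next
        have "last cs \<noteq> a" "hd cs \<noteq> a" using False ne by auto
        then show "ug_adj A' (last cs) (hd cs)" using xy la by blast
      qed (use len dis in auto)
      then show False using tr unfolding ug_tree_def by blast
    next
      case True
      then obtain i where i: "i < length cs" "cs ! i = a" by (metis in_set_conv_nth)
      have nb: "\<And>j. j < length cs \<Longrightarrow> ug_adj A (cs ! j) a \<Longrightarrow> cs ! j = b"
        using az sym by blast
      have eqidx: "\<And>j k. j < length cs \<Longrightarrow> k < length cs \<Longrightarrow> cs ! j = cs ! k \<Longrightarrow> j = k"
        using dis nth_eq_iff_index_eq by blast
      consider "i = 0" | "i = length cs - 1" "i > 0" | "0 < i" "i < length cs - 1" using i by linarith
      then show False
      proof cases
        case 1
        have "cs ! 1 = b" using nb[of 1] adj[of 0] len i 1 sym by auto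
        moreover have "cs ! (length cs - 1) = b" using nb[of "length cs - 1"] la hd0 last0 i 1 len by auto
        moreover have "1 < length cs" "length cs - 1 < length cs" using len by auto
        ultimately have "1 = length cs - 1" using eqidx by metis
        then show False using len by simp
      next
        case 2
        have e: "Suc (i - 1) = i" using 2 by simp
        have aj: "ug_adj A (cs ! (i - 1)) (cs ! i)" by (metis e adj i(1))
        have "cs ! (i - 1) = b" using nb[of "i - 1"] aj i by simp
        moreover have "cs ! 0 = b"
        proof -
          have "last cs = a" using last0 i 2 by simp
          then have "ug_adj A (cs ! 0) a" using la hd0 sym by metis
          then show ?thesis using nb[of 0] ne by simp
        qed
        moreover have "i - 1 < length cs" "0 < length cs" using i len by auto
        ultimately have "i - 1 = 0" using eqidx by metis
        then show False using len 2 by simp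
      next
        case 3
        have e: "Suc (i - 1) = i" using 3 by simp
        have aj: "ug_adj A (cs ! (i - 1)) (cs ! i)" by (metis e adj i(1))
        have "cs ! (i - 1) = b" using nb[of "i - 1"] aj i by simp
        have aj2: "ug_adj A (cs ! i) (cs ! Suc i)" using adj[of i] 3 by simp
        then have "ug_adj A (cs ! (i + 1)) a" using sym i(2) by simp
        moreover have "i + 1 < length cs" using 3 by simp
        ultimately have "cs ! (i + 1) = b" using nb by blast
        moreover note \<open>cs ! (i - 1) = b\<close>
        moreover have "i - 1 < length cs" "i + 1 < length cs" using i 3 by auto
        ultimately have "i - 1 = i + 1" using eqidx by metis
        then show False using 3 by simp
      qed
    qed
  qed
qed


theorem lemma25:
  fixes n :: nat and V' :: "'a set" and A' A :: "('a \<times> 'a) set" and a b :: 'a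
  assumes "n > 1"
    and "in_T (n - 1) V' A'"
    and "b \<in> V'"
    and "a \<notin> V'"
    and "(domination_forced V' A' b \<and> A = A' \<union> {(b, a), (a, a)})
         \<or> ((b, b) \<notin> A' \<and> out_degree A' (f_minus V' A' b) = 1
            \<and> domination_forced V' A' (f_minus V' A' b) \<and> A = A' \<union> {(a, b), (a, a)})"
  shows "in_T n (insert a V') A"
proof -
  define V where "V = insert a V'"
  have dg': "digraph V' A'" and cV': "card V' = n - 1" and loc': "locatable V' A'"
    and g': "gamma_OL V' A' = n - 1" and tr': "ug_tree V' A'"
    using assms(2) unfolding in_T_def by auto
  have finV': "finite V'" and AV': "A' \<subseteq> V' \<times> V'" using dg' unfolding digraph_def by auto
  have g'': "gamma_OL V' A' = card V'" using g' cV' by simp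
  obtain S0 where S0: "is_OLD V' A' S0" using loc' unfolding locatable_def by blast
  have "S0 \<subseteq> V'" using S0 unfolding is_OLD_def by simp
  have OV': "is_OLD V' A' V'" by (rule OLD_mono[OF S0 \<open>S0 \<subseteq> V'\<close> order_refl])
  have allV': "\<And>S. is_OLD V' A' S \<Longrightarrow> S = V'" using OLD_all[OF dg' g''] .
  have N'sub: "\<And>v. in_nbrs A' v \<subseteq> V'" using AV' unfolding in_nbrs_def by auto
  have aN': "\<And>v. a \<notin> in_nbrs A' v" using N'sub assms(4) by blast
  have OV'dom: "\<And>v. v \<in> V' \<Longrightarrow> \<exists>s\<in>V'. s \<in> in_nbrs A' v"
    using OV' unfolding is_OLD_def by blast
  have OV'sep: "\<And>u w. u \<in> V' \<Longrightarrow> w \<in> V' \<Longrightarrow> u \<noteq> w \<Longrightarrow>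
      \<exists>s\<in>V'. (s \<in> in_nbrs A' u) \<noteq> (s \<in> in_nbrs A' w)"
    using OV' unfolding is_OLD_def by blast
  have finV: "finite V" using finV' V_def by simp
  have cardV: "card V = n" using finV' assms(4) cV' assms(1) V_def by simp
  have ab: "a \<noteq> b" using assms(3,4) by blast
  have key: "is_OLD V A V \<and> (\<forall>S. is_OLD V A S \<longrightarrow> S = V)"
    using assms(5)
  proof (elim disjE conjE)
    assume df: "domination_forced V' A' b" and Aeq: "A = A' \<union> {(b, a), (a, a)}"
    obtain w where w: "w \<in> V'" "in_nbrs A' w = {b}" using df unfolding domination_forced_def by blast
    have NA: "\<And>v. v \<in> V' \<Longrightarrow> in_nbrs A v = in_nbrs A' v"
      using assms(4) unfolding Aeq in_nbrs_def by auto
    have Na: "in_nbrs A a = {b, a}" using assms(4) AV' unfolding Aeq in_nbrs_def by auto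
    show ?thesis
    proof
      show "is_OLD V A V" unfolding is_OLD_def
      proof (intro conjI ballI impI)
        show "V \<subseteq> V" by simp
        fix v assume v: "v \<in> V"
        show "\<exists>s\<in>V. s \<in> in_nbrs A v"
        proof (cases "v = a")
          case True then show ?thesis using Na V_def by auto
        next
          case False then have vV: "v \<in> V'" using v V_def by auto
          then obtain s where "s \<in> V'" "s \<in> in_nbrs A' v" using OV'dom by blast
          then show ?thesis using NA[OF vV] V_def by auto
        qed
      next
        fix u w assume u: "u \<in> V" and w: "w \<in> V" and uw: "u \<noteq> w"
        show "\<exists>s\<in>V. (s \<in> in_nbrs A u) \<noteq> (s \<in> in_nbrs A w)"
        proof (cases "u = a")
          case True
          then have wV: "w \<in> V'" using w uw V_def by auto
          then have "a \<notin> in_nbrs A w" using NA aN' by simp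
          then show ?thesis using True Na V_def by (intro bexI[of _ a]) auto
        next
          case False
          then have uV: "u \<in> V'" using u V_def by auto
          show ?thesis
          proof (cases "w = a")
            case True
            have "a \<notin> in_nbrs A u" using NA aN' uV by simp
            then show ?thesis using True Na V_def by (intro bexI[of _ a]) auto
          next
            case False
            then have wV: "w \<in> V'" using w V_def by auto
            obtain s where "s \<in> V'" "(s \<in> in_nbrs A' u) \<noteq> (s \<in> in_nbrs A' w)"
              using OV'sep[OF uV wV uw] by blast
            then show ?thesis using NA[OF uV] NA[OF wV] V_def by (intro bexI[of _ s]) auto
          qed
        qed
      qed
      show "\<forall>S. is_OLD V A S \<longrightarrow> S = V"
      proof (intro allI impI)
        fix S assume S: "is_OLD V A S"
        have SV: "S \<subseteq> V" using S unfolding is_OLD_def by simp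
        have dom: "\<And>v. v \<in> V \<Longrightarrow> \<exists>s\<in>S. s \<in> in_nbrs A v" using S unfolding is_OLD_def by blast
        have sep: "\<And>u w. u \<in> V \<Longrightarrow> w \<in> V \<Longrightarrow> u \<noteq> w \<Longrightarrow>
            \<exists>s\<in>S. (s \<in> in_nbrs A u) \<noteq> (s \<in> in_nbrs A w)"
          using S unfolding is_OLD_def by blast
        have aS: "a \<in> S"
        proof -
          have "w \<in> V" "a \<in> V" "a \<noteq> w" using w assms(4) V_def by auto
          then obtain s where s: "s \<in> S" "(s \<in> in_nbrs A a) \<noteq> (s \<in> in_nbrs A w)"
            using sep by blast
          have "in_nbrs A w = {b}" using NA w by simp
          then have "s = a" using s(2) Na by auto
          then show ?thesis using s(1) by simp
        qed
        have "is_OLD V' A' (S \<inter> V')" unfolding is_OLD_def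
        proof (intro conjI ballI impI)
          show "S \<inter> V' \<subseteq> V'" by blast
          fix v assume v: "v \<in> V'"
          obtain s where "s \<in> S" "s \<in> in_nbrs A v" using dom[of v] v V_def by auto
          then show "\<exists>s\<in>S \<inter> V'. s \<in> in_nbrs A' v" using NA[OF v] N'sub by blast
        next
          fix u w assume u: "u \<in> V'" and w: "w \<in> V'" and uw: "u \<noteq> w"
          obtain s where s: "s \<in> S" "(s \<in> in_nbrs A u) \<noteq> (s \<in> in_nbrs A w)"
            using sep[of u w] u w uw V_def by auto
          then show "\<exists>s\<in>S \<inter> V'. (s \<in> in_nbrs A' u) \<noteq> (s \<in> in_nbrs A' w)"
            using NA[OF u] NA[OF w] N'sub by blast
        qed
        then have "S \<inter> V' = V'" by (rule allV')
        then show "S = V" using aS SV V_def by blast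
      qed
    qed
  next
    assume nbb: "(b, b) \<notin> A'" and od: "out_degree A' (f_minus V' A' b) = 1"
      and dfc: "domination_forced V' A' (f_minus V' A' b)" and Aeq: "A = A' \<union> {(a, b), (a, a)}"
    define c where "c = f_minus V' A' b"
    have fc: "forcing_arc V' A' c b" unfolding c_def by (rule forcing_tail[OF dg' loc' g'' assms(3)])
    then have cb: "(c, b) \<in> A'" unfolding forcing_arc_def by simp
    then have cV: "c \<in> V'" using AV' by auto
    obtain w where w: "w \<in> V'" "in_nbrs A' w = {c}" using dfc unfolding c_def domination_forced_def by auto
    have cw: "(c, w) \<in> A'" using w unfolding in_nbrs_def by auto
    have "card (out_nbrs A' c) = 1" using od unfolding c_def out_degree_def by simp
    then obtain z where z: "out_nbrs A' c = {z}" using card_1_singletonE by blast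
    have cout: "\<And>v. (c, v) \<in> A' \<Longrightarrow> v = b"
    proof -
      fix v assume cv: "(c, v) \<in> A'"
      have "v \<in> out_nbrs A' c" "b \<in> out_nbrs A' c" using cv cb unfolding out_nbrs_def by auto
      then show "v = b" using z by simp
    qed
    have "w = b" using cout cw by blast
    then have Nb': "in_nbrs A' b = {c}" using w by simp
    have NA: "\<And>v. v \<in> V' \<Longrightarrow> v \<noteq> b \<Longrightarrow> in_nbrs A v = in_nbrs A' v"
      using assms(4) unfolding Aeq in_nbrs_def by auto
    have Nb: "in_nbrs A b = {c, a}" using Nb' ab unfolding Aeq in_nbrs_def by auto
    have Na: "in_nbrs A a = {a}" using assms(4) AV' ab unfolding Aeq in_nbrs_def by auto
    have gen: "\<And>s v. s \<in> V' \<Longrightarrow> (s \<in> in_nbrs A v) = (s \<in> in_nbrs A' v)"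
      using assms(4) unfolding Aeq in_nbrs_def by auto
    have aNv: "\<And>v. v \<in> V' \<Longrightarrow> (a \<in> in_nbrs A v) = (v = b)"
      using assms(4) AV' unfolding Aeq in_nbrs_def by auto
    have ca: "c \<noteq> a" using cV assms(4) by auto
    have cNv: "\<And>v. v \<noteq> b \<Longrightarrow> c \<notin> in_nbrs A' v" using cout unfolding in_nbrs_def by auto
    show ?thesis
    proof
      show "is_OLD V A V" unfolding is_OLD_def
      proof (intro conjI ballI impI)
        show "V \<subseteq> V" by simp
        fix v assume v: "v \<in> V"
        show "\<exists>s\<in>V. s \<in> in_nbrs A v"
        proof (cases "v = a")
          case True then show ?thesis using Na V_def by auto
        next
          case False then have vV: "v \<in> V'" using v V_def by auto
          then obtain s where "s \<in> V'" "s \<in> in_nbrs A' v" using OV'dom by blast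
          then show ?thesis using gen V_def by auto
        qed
      next
        fix u w assume u: "u \<in> V" and w: "w \<in> V" and uw: "u \<noteq> w"
        have sepa: "\<exists>s\<in>V. (s \<in> in_nbrs A a) \<noteq> (s \<in> in_nbrs A x)" if x: "x \<in> V'" for x
        proof (cases "x = b")
          case True
          then show ?thesis using Nb Na ca cV V_def by (intro bexI[of _ c]) auto
        next
          case False
          then have "a \<notin> in_nbrs A x" using aNv x by simp
          then show ?thesis using Na V_def by (intro bexI[of _ a]) auto
        qed
        show "\<exists>s\<in>V. (s \<in> in_nbrs A u) \<noteq> (s \<in> in_nbrs A w)"
        proof (cases "u = a")
          case True
          then have wV: "w \<in> V'" using w uw V_def by auto
          then show ?thesis using sepa True by blast
        next
          case False
          then have uV: "u \<in> V'" using u V_def by auto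
          show ?thesis
          proof (cases "w = a")
            case True
            then show ?thesis using sepa[OF uV] by metis
          next
            case False
            then have wV: "w \<in> V'" using w V_def by auto
            obtain s where "s \<in> V'" "(s \<in> in_nbrs A' u) \<noteq> (s \<in> in_nbrs A' w)"
              using OV'sep[OF uV wV uw] by blast
            then show ?thesis using gen V_def by (intro bexI[of _ s]) auto
          qed
        qed
      qed
      show "\<forall>S. is_OLD V A S \<longrightarrow> S = V"
      proof (intro allI impI)
        fix S assume S: "is_OLD V A S"
        have SV: "S \<subseteq> V" using S unfolding is_OLD_def by simp
        have dom: "\<And>v. v \<in> V \<Longrightarrow> \<exists>s\<in>S. s \<in> in_nbrs A v" using S unfolding is_OLD_def by blast
        have sep: "\<And>u w. u \<in> V \<Longrightarrow> w \<in> V \<Longrightarrow> u \<noteq> w \<Longrightarrow>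
            \<exists>s\<in>S. (s \<in> in_nbrs A u) \<noteq> (s \<in> in_nbrs A w)"
          using S unfolding is_OLD_def by blast
        have aS: "a \<in> S" using dom[of a] Na V_def by auto
        have cS: "c \<in> S"
        proof -
          have "a \<in> V" "b \<in> V" using assms(3) V_def by auto
          then obtain s where s: "s \<in> S" "(s \<in> in_nbrs A a) \<noteq> (s \<in> in_nbrs A b)"
            using sep ab by blast
          then have "s = c" using Na Nb by auto
          then show ?thesis using s(1) by simp
        qed
        have "is_OLD V' A' (S \<inter> V')" unfolding is_OLD_def
        proof (intro conjI ballI impI)
          show "S \<inter> V' \<subseteq> V'" by blast
          fix v assume v: "v \<in> V'"
          show "\<exists>s\<in>S \<inter> V'. s \<in> in_nbrs A' v"
          proof (cases "v = b")
            case True then show ?thesis using cS cV Nb' by auto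
          next
            case False
            obtain s where "s \<in> S" "s \<in> in_nbrs A v" using dom[of v] v V_def by auto
            then show ?thesis using NA[OF v False] N'sub by blast
          qed
        next
          fix u w assume u: "u \<in> V'" and w: "w \<in> V'" and uw: "u \<noteq> w"
          obtain s where s: "s \<in> S" "(s \<in> in_nbrs A u) \<noteq> (s \<in> in_nbrs A w)"
            using sep[of u w] u w uw V_def by auto
          show "\<exists>s\<in>S \<inter> V'. (s \<in> in_nbrs A' u) \<noteq> (s \<in> in_nbrs A' w)"
          proof (cases "s \<in> V'")
            case True
            then show ?thesis using s gen by blast
          next
            case False
            then have "s = a" using s(1) SV V_def by auto
            then have "u = b \<or> w = b" using s(2) aNv u w by auto
            then show ?thesis
            proof
              assume "u = b"
              then have "c \<in> in_nbrs A' u" "c \<notin> in_nbrs A' w" using Nb' cNv uw by auto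
              then show ?thesis using cS cV by blast
            next
              assume "w = b"
              then have "c \<in> in_nbrs A' w" "c \<notin> in_nbrs A' u" using Nb' cNv uw by auto
              then show ?thesis using cS cV by blast
            qed
          qed
        qed
        then have "S \<inter> V' = V'" by (rule allV')
        then show "S = V" using aS SV V_def by blast
      qed
    qed
  qed
  have gam: "gamma_OL V A = card V" unfolding gamma_OL_def
  proof (rule Least_equality)
    show "\<exists>S. is_OLD V A S \<and> card S = card V" using key by blast
    fix k assume "\<exists>S. is_OLD V A S \<and> card S = k"
    then show "card V \<le> k" using key by auto
  qed
  have loc: "locatable V A" using key unfolding locatable_def by blast
  have Asub: "A' \<subseteq> A" and Aext: "A \<subseteq> A' \<union> {(a, b), (b, a), (a, a)}"
    and abA: "(a, b) \<in> A \<or> (b, a) \<in> A" using assms(5) by auto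
  have AV: "A \<subseteq> V \<times> V" using Aext AV' assms(3) V_def by auto
  have adjab: "ug_adj A a b" using abA ab unfolding ug_adj_def by blast
  have az: "\<And>z. ug_adj A a z \<Longrightarrow> z = b"
  proof -
    fix z assume "ug_adj A a z"
    then have "z \<noteq> a" "(a, z) \<in> A \<or> (z, a) \<in> A" unfolding ug_adj_def by auto
    then show "z = b" using Aext AV' assms(4) by auto
  qed
  have xy: "\<And>x y. x \<noteq> a \<Longrightarrow> y \<noteq> a \<Longrightarrow> ug_adj A x y \<Longrightarrow> ug_adj A' x y"
    using Aext unfolding ug_adj_def by auto
  have tr: "ug_connected (insert a V') A \<and> \<not>(\<exists>cs. ug_cycle (insert a V') A cs)"
    by (rule tree_ext[OF tr' AV' assms(4) assms(3) Asub adjab az xy])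
  show ?thesis
    unfolding in_T_def ug_tree_def digraph_def
    using finV AV cardV tr loc gam V_def by auto
qed

end
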